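(* Let $f$ be a function, $x^\star$ one of its global optima with associated $(\nu,\rho)$, let $C>1$, and let $d=d(\nu,C,\rho)>0$. Set \[ \tilde n=\Big\lfloor \frac{n}{\bar\log n}\Big\rfloor\,\frac{d\log(1/\rho)}{C}, \] and assume $\tilde n>e$. Then after a run of \texttt{SequOOL} with budget $n$ (deterministic feedback), the simple regret satisfies \[ r_n\le \nu\Big(\frac{\tilde n}{\log \tilde n}\Big)^{-1/d}. \]
   Context: Let $\mathcal X$ be a set and $f:\mathcal X\to\mathbb R$ a function attaining its supremum; a point $x^\star$ with $f(x^\star)=\sup_{x\in\mathcal X}f(x)$ is a global optimum. Hierarchical partitioning $\mathcal P=\{\mathcal P_{h,i}\}$: - for every depth $h\ge 0$, the cells $\{\mathcal P_{h,i}\}_{1\le i\le I_h}$ form a partition of $\mathcal X$, and $\mathcal P_{0,1}=\mathcal X$; - each cell $\mathcal P_{h,i}$ is partitioned into finitely many children cells of depth $h+1$; - each cell has a fixed representative point $x_{h,i}\in\mathcal P_{h,i}$, and we write $f_{h,i}=f(x_{h,i})$; - for a global optimum $x^\star$, $i^\star_h$ is the index of the unique depth-$h$ cell containing $x^\star$. Local smoothness: a global optimum $x^\star$ has associated $(\nu,\rho)$, with $\nu>0$ and $\rho\in(0,1)$, if for all $h\in\mathbb N$ and all $x\in\mathcal P_{h,i^\star_h}$ we have $f(x)\ge f(x^\star)-\nu\rho^h$. Near-optimality dimension: for $\nu>0$, $C>1$, $\rho\in(0,1)$, let $\mathcal N_h(\epsilon)$ be the number of depth-$h$ cells $\mathcal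 P_{h,i}$ with $\sup_{x\in\mathcal P_{h,i}}f(x)\ge f(x^\star)-\epsilon$. Define \[ d(\nu,C,\rho)=\inf\{d'\ge 0:\ \forall h\ge 0,\ \mathcal N_h(3\nu\rho^h)\le C\rho^{-d'h}\}, \] which is assumed finite. Notation: $\bar\log n=\sum_{t=1}^n 1/t$ (the $n$-th harmonic number). Simple regret: $r_n=f(x^\star)-f(x(n))$. Deterministic feedback: evaluating a cell $\mathcal P_{h,i}$ returns $f_{h,i}$ exactly. Opening a cell means evaluating each of its children cells once. \texttt{SequOOL} with budget $n$: set $h_{\max}=\lfloor n/\bar\log n\rfloor$ and open $\mathcal P_{0,1}$. Then, for $h=1,2,\dots,h_{\max}$ in increasing order, open the $\lfloor h_{\max}/h\rfloor$ depth-$h$ cells having the largest values $f_{h,j}$ among the evaluated depth-$h$ cells (or all of them if there are fewer). Finally, output $x(n)$, a representative point $x_{h,i}$ of an evaluated cell maximizing $f_{h,i}$. *)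

theory Defs
  imports "HOL-Analysis.Analysis"
begin

text \<open>Hierarchical partitioning of X: depth h has cells P h i, 1 \<le> i \<le> I h,
  with representative points x h i.\<close>

definition children :: "(nat \<Rightarrow> nat) \<Rightarrow> (nat \<Rightarrow> nat \<Rightarrow> 'a set) \<Rightarrow> nat \<Rightarrow> nat \<Rightarrow> nat set" where
  "children I P h i = {j \<in> {1..I (Suc h)}. P (Suc h) j \<subseteq> P h i}"

definition hier_partition ::
  "'a set \<Rightarrow> (nat \<Rightarrow> nat) \<Rightarrow> (nat \<Rightarrow> nat \<Rightarrow> 'a set) \<Rightarrow> (nat \<Rightarrow> nat \<Rightarrow> 'a) \<Rightarrow> bool" where
  "hier_partition X I P x \<longleftrightarrow>
     I 0 = 1 \<and> P 0 1 = X \<and>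
     (\<forall>h. (\<Union>i\<in>{1..I h}. P h i) = X \<and>
          (\<forall>i\<in>{1..I h}. \<forall>j\<in>{1..I h}. i \<noteq> j \<longrightarrow> P h i \<inter> P h j = {})) \<and>
     (\<forall>h. \<forall>i\<in>{1..I h}. P h i = (\<Union>j\<in>children I P h i. P (Suc h) j)) \<and>
     (\<forall>h. \<forall>i\<in>{1..I h}. x h i \<in> P h i)"

definition opt_index :: "(nat \<Rightarrow> nat) \<Rightarrow> (nat \<Rightarrow> nat \<Rightarrow> 'a set) \<Rightarrow> 'a \<Rightarrow> nat \<Rightarrow> nat" where
  "opt_index I P xstar h = (THE i. i \<in> {1..I h} \<and> xstar \<in> P h i)"

definition local_smooth ::
  "('a \<Rightarrow> real) \<Rightarrow> (nat \<Rightarrow> nat) \<Rightarrow> (nat \<Rightarrow> nat \<Rightarrow> 'a set) \<Rightarrow> 'a \<Rightarrow> real \<Rightarrow> real \<Rightarrow> bool" where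
  "local_smooth f I P xstar \<nu> \<rho> \<longleftrightarrow>
     (\<forall>h. \<forall>y \<in> P h (opt_index I P xstar h). f y \<ge> f xstar - \<nu> * \<rho> ^ h)"

definition near_opt_count ::
  "('a \<Rightarrow> real) \<Rightarrow> (nat \<Rightarrow> nat) \<Rightarrow> (nat \<Rightarrow> nat \<Rightarrow> 'a set) \<Rightarrow> 'a \<Rightarrow> nat \<Rightarrow> real \<Rightarrow> nat" where
  "near_opt_count f I P xstar h \<epsilon> =
     card {i \<in> {1..I h}. Sup (f ` P h i) \<ge> f xstar - \<epsilon>}"

definition near_opt_set ::
  "('a \<Rightarrow> real) \<Rightarrow> (nat \<Rightarrow> nat) \<Rightarrow> (nat \<Rightarrow> nat \<Rightarrow> 'a set) \<Rightarrow> 'a \<Rightarrow> real \<Rightarrow> real \<Rightarrow> real \<Rightarrow> real set" where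
  "near_opt_set f I P xstar \<nu> C \<rho> =
     {d'. d' \<ge> 0 \<and> (\<forall>h. real (near_opt_count f I P xstar h (3 * \<nu> * \<rho> ^ h)) \<le> C * \<rho> powr (- d' * real h))}"

definition near_opt_dim ::
  "('a \<Rightarrow> real) \<Rightarrow> (nat \<Rightarrow> nat) \<Rightarrow> (nat \<Rightarrow> nat \<Rightarrow> 'a set) \<Rightarrow> 'a \<Rightarrow> real \<Rightarrow> real \<Rightarrow> real \<Rightarrow> real" where
  "near_opt_dim f I P xstar \<nu> C \<rho> = Inf (near_opt_set f I P xstar \<nu> C \<rho>)"

definition sequool_hmax :: "nat \<Rightarrow> nat" where
  "sequool_hmax n = nat \<lfloor>real n / (harm n :: real)\<rfloor>"

definition evaluated ::
  "(nat \<Rightarrow> nat) \<Rightarrow> (nat \<Rightarrow> nat \<Rightarrow> 'a set) \<Rightarrow> (nat \<Rightarrow> nat set) \<Rightarrow> nat \<Rightarrow> nat set" where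
  "evaluated I P Op h = (if h = 0 then {} else (\<Union>i\<in>Op (h - 1). children I P (h - 1) i))"

text \<open>A run of SequOOL with budget n (any tie-breaking): Op h are the opened
  depth-h cells, out = (h,i) is the evaluated cell whose representative is returned.\<close>
definition sequool_run ::
  "('a \<Rightarrow> real) \<Rightarrow> (nat \<Rightarrow> nat) \<Rightarrow> (nat \<Rightarrow> nat \<Rightarrow> 'a set) \<Rightarrow> (nat \<Rightarrow> nat \<Rightarrow> 'a) \<Rightarrow> nat
     \<Rightarrow> (nat \<Rightarrow> nat set) \<Rightarrow> nat \<times> nat \<Rightarrow> bool" where
  "sequool_run f I P x n Op out \<longleftrightarrow>
     (let hmax = sequool_hmax n in
       Op 0 = {1} \<and>
       (\<forall>h. 1 \<le> h \<and> h \<le> hmax \<longrightarrow>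
          Op h \<subseteq> evaluated I P Op h \<and>
          card (Op h) = min (hmax div h) (card (evaluated I P Op h)) \<and>
          (\<forall>i\<in>Op h. \<forall>j\<in>evaluated I P Op h - Op h. f (x h j) \<le> f (x h i))) \<and>
       (\<forall>h. hmax < h \<longrightarrow> Op h = {}) \<and>
       snd out \<in> evaluated I P Op (fst out) \<and>
       (\<forall>h. \<forall>j\<in>evaluated I P Op h. f (x h j) \<le> f (x (fst out) (snd out))))"

definition ntilde :: "nat \<Rightarrow> real \<Rightarrow> real \<Rightarrow> real \<Rightarrow> real" where
  "ntilde n d \<rho> C = real (sequool_hmax n) * d * ln (1 / \<rho>) / C"

end

theory Submission imports Defs begin

lemma opt_idx:
  assumes part: "hier_partition X I P x" and xs: "xstar \<in> X"
  shows "opt_index I P xstar h \<in> {1..I h} \<and> xstar \<in> P h (opt_index I P xstar h)"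
proof -
  from part have U: "(\<Union>i\<in>{1..I h}. P h i) = X"
    and D: "\<forall>i\<in>{1..I h}. \<forall>j\<in>{1..I h}. i \<noteq> j \<longrightarrow> P h i \<inter> P h j = {}"
    unfolding hier_partition_def by blast+
  obtain i where i: "i \<in> {1..I h}" "xstar \<in> P h i" using U xs by blast
  have "\<And>j. j \<in> {1..I h} \<and> xstar \<in> P h j \<Longrightarrow> j = i" using D i by blast
  hence "opt_index I P xstar h = i" unfolding opt_index_def using i by (intro the_equality) auto
  thus ?thesis using i by simp
qed

lemma opt_idx_uniq:
  assumes part: "hier_partition X I P x" and xs: "xstar \<in> X"
    and "i \<in> {1..I h}" "xstar \<in> P h i"
  shows "i = opt_index I P xstar h"
proof -
  from part have D: "\<forall>i\<in>{1..I h}. \<forall>j\<in>{1..I h}. i \<noteq> j \<longrightarrow> P h i \<inter> P h j = {}"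
    unfolding hier_partition_def by blast
  show ?thesis using opt_idx[OF part xs, of h] D assms(3,4) by blast
qed

lemma opt_child:
  assumes part: "hier_partition X I P x" and xs: "xstar \<in> X"
  shows "opt_index I P xstar (Suc k) \<in> children I P k (opt_index I P xstar k)"
proof -
  let ?i = "opt_index I P xstar k"
  have i: "?i \<in> {1..I k}" "xstar \<in> P k ?i" using opt_idx[OF part xs] by auto
  from part i(1) have "P k ?i = (\<Union>j\<in>children I P k ?i. P (Suc k) j)"
    unfolding hier_partition_def by blast
  then obtain j where j: "j \<in> children I P k ?i" "xstar \<in> P (Suc k) j" using i(2) by blast
  have "j \<in> {1..I (Suc k)}" using j(1) unfolding children_def by auto
  hence "j = opt_index I P xstar (Suc k)" using opt_idx_uniq[OF part xs] j(2) by blast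
  thus ?thesis using j(1) by simp
qed

lemma dim_ok:
  assumes ne: "near_opt_set f I P xstar \<nu> C \<rho> \<noteq> {}" and rho: "0 < \<rho>" "\<rho> < 1" and C: "C > 1"
  shows "real (near_opt_count f I P xstar h (3 * \<nu> * \<rho> ^ h))
           \<le> C * \<rho> powr (- near_opt_dim f I P xstar \<nu> C \<rho> * real h)"
proof -
  let ?S = "near_opt_set f I P xstar \<nu> C \<rho>"
  let ?N = "real (near_opt_count f I P xstar h (3 * \<nu> * \<rho> ^ h))"
  let ?d = "near_opt_dim f I P xstar \<nu> C \<rho>"
  let ?L = "ln (1/\<rho>)"
  have L: "?L > 0" using rho by simp
  have pw: "\<rho> powr (- e * real h) = exp (e * real h * ?L)" for e
    using rho by (simp add: powr_def ln_div)
  have S: "\<And>e. e \<in> ?S \<Longrightarrow> ?N \<le> C * \<rho> powr (- e * real h)"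
    unfolding near_opt_set_def by blast
  show ?thesis
  proof (cases "?N = 0")
    case True thus ?thesis using C rho by simp
  next
    case False
    hence Npos: "?N > 0" by simp
    show ?thesis
    proof (cases "h = 0")
      case True
      obtain e where "e \<in> ?S" using ne by blast
      thus ?thesis using S[of e] True by simp
    next
      case False
      have "ln (?N / C) / (real h * ?L) \<le> ?d"
        unfolding near_opt_dim_def
      proof (rule cInf_greatest[OF ne])
        fix e assume e: "e \<in> ?S"
        have "?N / C \<le> exp (e * real h * ?L)" using S[OF e] pw C by (simp add: field_simps)
        hence "ln (?N / C) \<le> ln (exp (e * real h * ?L))" using Npos C by (intro ln_mono) auto
        hence "ln (?N / C) \<le> e * real h * ?L" by simp
        thus "ln (?N / C) / (real h * ?L) \<le> e" using False L by (simp add: field_simps)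
      qed
      hence "ln (?N / C) \<le> ?d * real h * ?L" using False L by (simp add: field_simps)
      hence "exp (ln (?N / C)) \<le> exp (?d * real h * ?L)" by simp
      hence "?N / C \<le> exp (?d * real h * ?L)" using Npos C by simp
      hence "?N \<le> C * exp (?d * real h * ?L)" using C by (simp add: field_simps)
      thus ?thesis by (simp only: pw)
    qed
  qed
qed

lemma sup_ge:
  assumes part: "hier_partition X I P x" and opt: "\<forall>y\<in>X. (f::_\<Rightarrow>real) y \<le> f xstar"
    and i: "i \<in> {1..I h}"
  shows "f (x h i) \<le> Sup (f ` P h i)"
proof -
  from part have U: "(\<Union>i\<in>{1..I h}. P h i) = X" and xi: "x h i \<in> P h i"
    using i unfolding hier_partition_def by blast+
  have sub: "P h i \<subseteq> X" using U i by blast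
  have "bdd_above (f ` P h i)" using sub opt by (intro bdd_aboveI[of _ "f xstar"]) auto
  thus ?thesis using xi by (intro cSup_upper) auto
qed

lemma key:
  assumes part: "hier_partition X I P x"
    and opt: "xstar \<in> X" "\<forall>y\<in>X. f y \<le> f xstar"
    and nu: "\<nu> > 0" and rho: "0 < \<rho>" "\<rho> < 1"
    and smooth: "local_smooth f I P xstar \<nu> \<rho>"
    and C: "C > 1"
    and dfin: "near_opt_set f I P xstar \<nu> C \<rho> \<noteq> {}"
    and run: "sequool_run f I P x n Op out"
    and H: "\<forall>h'. 1 \<le> h' \<and> h' \<le> H \<longrightarrow> h' \<le> sequool_hmax n \<and>
        C * \<rho> powr (- near_opt_dim f I P xstar \<nu> C \<rho> * real h') < real (sequool_hmax n div h') + 1"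
  shows "k \<le> H \<Longrightarrow> opt_index I P xstar k \<in> Op k"
proof (induction k)
  case 0
  have "opt_index I P xstar 0 \<in> {1..I 0}" using opt_idx[OF part opt(1)] by blast
  moreover have "I 0 = 1" using part unfolding hier_partition_def by blast
  moreover have "Op 0 = {1}" using run unfolding sequool_run_def Let_def by blast
  ultimately show ?case by simp
next
  case (Suc k)
  let ?m = "sequool_hmax n"
  let ?d = "near_opt_dim f I P xstar \<nu> C \<rho>"
  let ?E = "evaluated I P Op (Suc k)"
  let ?s = "opt_index I P xstar (Suc k)"
  have IH: "opt_index I P xstar k \<in> Op k" using Suc by simp
  have hk: "Suc k \<le> ?m" and lt: "C * \<rho> powr (- ?d * real (Suc k)) < real (?m div Suc k) + 1"
    using H Suc.prems by auto
  have E: "?E = (\<Union>i\<in>Op k. children I P k i)" unfolding evaluated_def by simp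
  have sE: "?s \<in> ?E" using E IH opt_child[OF part opt(1), of k] by blast
  have Efin: "finite ?E" using E unfolding children_def
    by (rule ssubst) (rule finite_subset[of _ "{1..I (Suc k)}"], auto)
  have ESub: "?E \<subseteq> {1..I (Suc k)}" using E unfolding children_def by auto
  from run hk have OpE: "Op (Suc k) \<subseteq> ?E"
    and cardOp: "card (Op (Suc k)) = min (?m div Suc k) (card ?E)"
    and top: "\<forall>i\<in>Op (Suc k). \<forall>j\<in>?E - Op (Suc k). f (x (Suc k) j) \<le> f (x (Suc k) i)"
    unfolding sequool_run_def Let_def by auto
  show ?case
  proof (rule ccontr)
    assume ns: "?s \<notin> Op (Suc k)"
    have "card (Op (Suc k)) < card ?E"
      using ns sE OpE Efin by (intro psubset_card_mono) auto
    hence cOp: "card (Op (Suc k)) = ?m div Suc k" using cardOp by simp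
    have sv: "f (x (Suc k) ?s) \<ge> f xstar - \<nu> * \<rho> ^ Suc k"
      using smooth opt_idx[OF part opt(1), of "Suc k"] part
      unfolding local_smooth_def hier_partition_def by blast
    let ?A = "{i \<in> {1..I (Suc k)}. Sup (f ` P (Suc k) i) \<ge> f xstar - 3 * \<nu> * \<rho> ^ Suc k}"
    have rp: "\<nu> * \<rho> ^ Suc k \<ge> 0" using nu rho by simp
    have good: "f xstar - 3 * \<nu> * \<rho> ^ Suc k \<le> Sup (f ` P (Suc k) i)"
      if "i \<in> {1..I (Suc k)}" "f (x (Suc k) i) \<ge> f xstar - \<nu> * \<rho> ^ Suc k" for i
      using sup_ge[OF part opt(2) that(1)] that(2) rp by linarith
    have "insert ?s (Op (Suc k)) \<subseteq> ?A"
    proof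
      fix i assume "i \<in> insert ?s (Op (Suc k))"
      then consider "i = ?s" | "i \<in> Op (Suc k)" by blast
      thus "i \<in> ?A"
      proof cases
        case 1 thus ?thesis using good sv sE ESub by blast
      next
        case 2
        have "f (x (Suc k) ?s) \<le> f (x (Suc k) i)" using top 2 sE ns by blast
        thus ?thesis using good sv 2 OpE ESub by fastforce
      qed
    qed
    hence "card (insert ?s (Op (Suc k))) \<le> card ?A" by (intro card_mono) auto
    moreover have "card (insert ?s (Op (Suc k))) = ?m div Suc k + 1"
      using cOp ns finite_subset[OF OpE Efin] by simp
    moreover have "card ?A = near_opt_count f I P xstar (Suc k) (3 * \<nu> * \<rho> ^ Suc k)"
      unfolding near_opt_count_def by simp
    ultimately have "real (?m div Suc k + 1) \<le> C * \<rho> powr (- ?d * real (Suc k))"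
      using dim_ok[OF dfin rho C, of "Suc k"] by linarith
    thus False using lt by simp
  qed
qed

theorem corollary3:
  fixes X :: "'a set" and f :: "'a \<Rightarrow> real"
    and I :: "nat \<Rightarrow> nat" and P :: "nat \<Rightarrow> nat \<Rightarrow> 'a set" and x :: "nat \<Rightarrow> nat \<Rightarrow> 'a"
    and xstar :: 'a and \<nu> \<rho> C :: real and n :: nat
    and Op :: "nat \<Rightarrow> nat set" and out :: "nat \<times> nat"
  assumes part: "hier_partition X I P x"
    and opt: "xstar \<in> X" "\<forall>y\<in>X. f y \<le> f xstar"
    and nu: "\<nu> > 0" and rho: "0 < \<rho>" "\<rho> < 1"
    and smooth: "local_smooth f I P xstar \<nu> \<rho>"
    and C: "C > 1"
    and dfin: "near_opt_set f I P xstar \<nu> C \<rho> \<noteq> {}"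
    and dpos: "near_opt_dim f I P xstar \<nu> C \<rho> > 0"
    and nt: "ntilde n (near_opt_dim f I P xstar \<nu> C \<rho>) \<rho> C > exp 1"
    and run: "sequool_run f I P x n Op out"
  shows "f xstar - f (x (fst out) (snd out))
           \<le> \<nu> * (ntilde n (near_opt_dim f I P xstar \<nu> C \<rho>) \<rho> C
                 / ln (ntilde n (near_opt_dim f I P xstar \<nu> C \<rho>) \<rho> C))
                 powr (- 1 / near_opt_dim f I P xstar \<nu> C \<rho>)"
proof -
  define m where "m = sequool_hmax n"
  define d where "d = near_opt_dim f I P xstar \<nu> C \<rho>"
  define L where "L = ln (1 / \<rho>)"
  define N where "N = ntilde n d \<rho> C"
  define Q where "Q = N / ln N"
  define T where "T = ln Q / (d * L)"
  define h where "h = nat \<lceil>T\<rceil>"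
  have L: "L > 0" using rho unfolding L_def by simp
  have d: "d > 0" using dpos unfolding d_def .
  have Ndef: "N = real m * d * L / C" unfolding N_def ntilde_def m_def L_def by simp
  have Ne: "N > exp 1" using nt unfolding N_def d_def .
  have N0: "N > 0" using Ne by (meson exp_gt_zero less_trans)
  have lnN: "ln N > 1" using Ne N0 by (metis ln_exp ln_less_cancel_iff exp_gt_zero)
  have Q1: "Q > 1"
  proof -
    have "ln N < N" using N0 by (rule ln_less_self)
    thus ?thesis unfolding Q_def using lnN by simp
  qed
  have lnQ: "ln Q \<le> ln N" unfolding Q_def using lnN N0 by (simp add: ln_div)
  have T0: "T > 0" unfolding T_def using Q1 d L by simp
  have h1: "h \<ge> 1" unfolding h_def using T0 by linarith
  have hT: "real h \<ge> T" "real h - 1 < T" unfolding h_def using T0 by linarith+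
  have pw: "\<rho> powr (- e) = exp (e * L)" for e
    using rho by (simp add: powr_def L_def ln_div)
  have expT: "exp (d * L * T) = Q" unfolding T_def using d L Q1 by simp
  have TCQ: "T * C * Q \<le> real m"
  proof -
    have "T * C * Q = ln Q * (C * N) / (d * L * ln N)"
      unfolding T_def Q_def by simp
    also have "C * N = real m * d * L" unfolding Ndef using C by simp
    finally have "T * C * Q = ln Q * (real m * d * L) / (d * L * ln N)" .
    also have "\<dots> = real m * (ln Q / ln N)" using d L by (simp add: field_simps)
    finally have "T * C * Q = real m * (ln Q / ln N)" .
    also have "\<dots> \<le> real m"
    proof -
      have "ln Q / ln N \<le> 1" using lnQ lnN by (simp add: divide_le_eq_1)
      hence "real m * (ln Q / ln N) \<le> real m * 1" by (intro mult_left_mono) auto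
      thus ?thesis by simp
    qed
    finally show ?thesis .
  qed
  have Hcond: "\<forall>h'. 1 \<le> h' \<and> h' \<le> h - 1 \<longrightarrow> h' \<le> m \<and>
        C * \<rho> powr (- d * real h') < real (m div h') + 1"
  proof (intro allI impI)
    fix h' :: nat assume a: "1 \<le> h' \<and> h' \<le> h - 1"
    have hh: "real h' < T" using a hT h1 by linarith
    have "exp (d * L * real h') \<le> exp (d * L * T)" using hh d L by simp
    hence "real h' * C * exp (d * L * real h') \<le> T * C * Q"
      using expT hh C a by (intro mult_mono) auto
    hence le: "real h' * (C * exp (d * L * real h')) \<le> real m" using TCQ by (simp add: ac_simps)
    have "exp (d * L * real h') \<ge> 1" using d L by simp
    hence "C * exp (d * L * real h') \<ge> C * 1" using C by (intro mult_left_mono) auto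
    hence ce: "C * exp (d * L * real h') > 1" using C by linarith
    have "real h' * 1 < real h' * (C * exp (d * L * real h'))"
      using a ce by (intro mult_strict_left_mono) auto
    hence "real h' < real m" using le by linarith
    moreover have "real m / real h' < real (m div h') + 1"
    proof -
      have "m = h' * (m div h') + m mod h'" by simp
      hence "real m = real h' * real (m div h') + real (m mod h')" by (metis of_nat_add of_nat_mult)
      moreover have "real (m mod h') < real h'" using a by simp
      ultimately have "real m < real h' * (real (m div h') + 1)" by (simp add: algebra_simps)
      thus ?thesis using a by (simp add: divide_less_eq mult.commute)
    qed
    moreover have "C * exp (d * L * real h') \<le> real m / real h'" using le a
      by (simp add: field_simps)
    ultimately show "h' \<le> m \<and> C * \<rho> powr (- d * real h') < real (m div h') + 1"
      using pw[of "d * real h'"] by (simp add: ac_simps)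
  qed
  have inOp: "opt_index I P xstar (h - 1) \<in> Op (h - 1)"
    using key[OF part opt nu rho smooth C dfin run, of "h - 1" "h - 1"] Hcond
    unfolding m_def d_def by simp
  let ?s = "opt_index I P xstar h"
  have sE: "?s \<in> evaluated I P Op h"
    using inOp opt_child[OF part opt(1), of "h - 1"] h1 unfolding evaluated_def
    by (cases h) auto
  have outge: "f (x h ?s) \<le> f (x (fst out) (snd out))"
    using run sE unfolding sequool_run_def Let_def by blast
  have sv: "f (x h ?s) \<ge> f xstar - \<nu> * \<rho> ^ h"
    using smooth opt_idx[OF part opt(1), of h] part
    unfolding local_smooth_def hier_partition_def by blast
  have "\<rho> ^ h = exp (- (real h * L))" using rho unfolding L_def
    by (simp add: ln_div exp_of_nat_mult[symmetric] powr_realpow[symmetric] powr_def)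
  also have "\<dots> \<le> exp (- (T * L))" using hT L by (simp add: mult_right_mono)
  also have "\<dots> = Q powr (- 1 / d)" unfolding T_def using Q1 d L by (simp add: powr_def)
  finally have "\<rho> ^ h \<le> Q powr (- 1 / d)" .
  hence "\<nu> * \<rho> ^ h \<le> \<nu> * Q powr (- 1 / d)" using nu by simp
  thus ?thesis using outge sv unfolding Q_def N_def d_def by linarith
qed
end
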